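(* For every multiterminal source $X_{\mathcal M}$, $$R_{\mathrm{SK}}\ \ge\ R_{\mathrm{CI}}\ \ge\ \mathrm{CI}(X_{\mathcal M})-\mathbf I(X_{\mathcal M}).$$
   Context: Multiterminal source model. Let $\mathcal M=\{1,\dots,m\}$, $m\ge 2$. Let $X_{\mathcal M}=(X_1,\dots,X_m)$ be jointly distributed random variables on finite alphabets. For $A\subseteq\mathcal M$ write $X_A=(X_i:i\in A)$. For $n\in\mathbb N$, $X^n_{\mathcal M}$ consists of $n$ i.i.d. copies of $X_{\mathcal M}$, and $X_A^n=(X_i^n:i\in A)$. Logarithms are base 2. An interactive communication $\mathbf F$ (depending on $n$) is a finite sequence of transmissions; each transmission is sent by some terminal $i$ and is a deterministic function of $X_i^n$ and the previous transmissions. Its range is the finite set $\mathcal F$. A common randomness (CR) obtained from $\mathbf F$ is a sequence $\mathbf J=\mathbf J^{(n)}$ of functions of $X^n_{\mathcal M}$ such that for every $0<\epsilon<1$ and all sufficiently large $n$ there exist $J_i=J_i(X_i^n,\mathbf F)$, $i\in\mathcal M$, with $\Pr[J_1=\cdots=J_m=\mathbf J]\ge1-\epsilon$. A secret key (SK) obtained from $\mathbf F$ with rate $R$ is a CR $\mathbf K$ obtained from $\mathbf F$ such that for every $\epsilon>0$ and all large $n$, $I(\mathbf K;\mathbf F)\le\epsilon$ and $\frac1nH(\mathbf K)\ge R-\epsilon$. For a partition $\mathcal P$ of $\mathcal M$ with $|\mathcal P|\ge2$ let $\Delta(\mathcal P)=\frac{1}{|\mathcal P|-1}[\sum_{A\in\mathcal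 P}H(X_A)-H(X_{\mathcal M})]$, and let $\mathbf I(X_{\mathcal M})=\min_{\mathcal P}\Delta(\mathcal P)$. This quantity equals the SK capacity, i.e. the supremum of achievable SK rates. $R_{\mathrm{SK}}$ is the infimum of reals $R\ge0$ such that for every $\epsilon>0$ and all sufficiently large $n$ there exist an interactive communication $\mathbf F$ with $\frac1n\log|\mathcal F|\le R+\epsilon$ and an SK $\mathbf K$ obtained from $\mathbf F$ with $\frac1nH(\mathbf K)\ge\mathbf I(X_{\mathcal M})-\epsilon$. For a random variable $\mathbf L$, define $$\mathbf I(X^n_{\mathcal M}|\mathbf L)=\max_{\mathcal P^*}\frac{1}{|\mathcal P^*|-1}\Big[\sum_{A\in\mathcal P^*}H(X^n_A|\mathbf L)-H(X^n_{\mathcal M}|\mathbf L)\Big],$$ the maximum being over the partitions $\mathcal P^*$ minimizing $\Delta$. A Wyner common information ($\mathrm{CI}_W$) is a sequence of finite-valued functions $\mathbf L^{(n)}(X^n_{\mathcal M})$ with $\frac1n\mathbf I(X^n_{\mathcal M}|\mathbf L^{(n)})\to0$. An interactive common information (CI) is a $\mathrm{CI}_W$ of the form $(\mathbf J,\mathbf F)$, where $\mathbf F$ is an interactive communication and $\mathbf J$ is a CR obtained from $\mathbf F$. $R$ is an achievable CI rate if some CI $\mathbf L$ satisfies, for every $\epsilon>0$, $\frac1nH(\mathbf L)\le R+\epsilon$ for all large $n$; $\mathrm{CI}(X_{\mathcal M})$ is the infimum of achievable CI rates. $R_{\mathrm{CI}}$ is the infimum of reals $R\ge0$ such that for every $\epsilon>0$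 and all large $n$ there exist an interactive communication $\mathbf F$ with $\frac1n\log|\mathcal F|\le R+\epsilon$ and a CR $\mathbf J$ such that $(\mathbf J,\mathbf F)$ is a CI. *)

theory Defs
  imports "HOL-Probability.Probability" "HOL-Library.Disjoint_Sets"
begin

definition ent :: "'b pmf \<Rightarrow> real" where
  "ent q = (\<Sum>y\<in>set_pmf q. - pmf q y * log 2 (pmf q y))"

definition H :: "'s pmf \<Rightarrow> ('s \<Rightarrow> 'b) \<Rightarrow> real" where
  "H p f = ent (map_pmf f p)"

definition condH :: "'s pmf \<Rightarrow> ('s \<Rightarrow> 'b) \<Rightarrow> ('s \<Rightarrow> 'c) \<Rightarrow> real" where
  "condH p f g = H p (\<lambda>x. (f x, g x)) - H p g"

definition MI :: "'s pmf \<Rightarrow> ('s \<Rightarrow> 'b) \<Rightarrow> ('s \<Rightarrow> 'c) \<Rightarrow> real" where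
  "MI p f g = H p f + H p g - H p (\<lambda>x. (f x, g x))"

(* A source is a joint pmf P on 'i \<Rightarrow> 'a (terminals 'i, common finite alphabet 'a).
   X^n_M : n i.i.d. copies, realised as x :: nat \<Rightarrow> 'i \<Rightarrow> 'a with coordinates t < n. *)
definition iid :: "('i \<Rightarrow> 'a) pmf \<Rightarrow> nat \<Rightarrow> (nat \<Rightarrow> 'i \<Rightarrow> 'a) pmf" where
  "iid P n = Pi_pmf {..<n} undefined (\<lambda>_. P)"

definition obs :: "nat \<Rightarrow> 'i \<Rightarrow> (nat \<Rightarrow> 'i \<Rightarrow> 'a) \<Rightarrow> (nat \<Rightarrow> 'a)" where
  "obs n i x = (\<lambda>t. if t < n then x t i else undefined)"

(* an interactive communication: a finite sequence of transmissions, each given by the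
   sending terminal and a function of its observation and the previous transmissions *)
type_synonym ('i, 'a) protocol = "('i \<times> ((nat \<Rightarrow> 'a) \<Rightarrow> nat list \<Rightarrow> nat)) list"

fun run :: "('i, 'a) protocol \<Rightarrow> ('i \<Rightarrow> nat \<Rightarrow> 'a) \<Rightarrow> nat list \<Rightarrow> nat list" where
  "run [] y h = h"
| "run ((i, g) # ps) y h = run ps y (h @ [g (y i) h])"

definition transcript :: "nat \<Rightarrow> ('i, 'a) protocol \<Rightarrow> (nat \<Rightarrow> 'i \<Rightarrow> 'a) \<Rightarrow> nat list" where
  "transcript n \<pi> x = run \<pi> (\<lambda>i. obs n i x) []"

definition range_card :: "nat \<Rightarrow> ('i, 'a) protocol \<Rightarrow> nat" where
  "range_card n \<pi> = card (range (transcript n \<pi>))"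

definition is_CR :: "('i \<Rightarrow> 'a) pmf \<Rightarrow> (nat \<Rightarrow> ('i, 'a) protocol) \<Rightarrow> (nat \<Rightarrow> (nat \<Rightarrow> 'i \<Rightarrow> 'a) \<Rightarrow> nat) \<Rightarrow> bool" where
  "is_CR P comm J \<longleftrightarrow>
     (\<forall>\<epsilon>::real. 0 < \<epsilon> \<and> \<epsilon> < 1 \<longrightarrow>
        (\<forall>\<^sub>F n in sequentially. \<exists>Js :: 'i \<Rightarrow> (nat \<Rightarrow> 'a) \<Rightarrow> nat list \<Rightarrow> nat.
           measure_pmf.prob (iid P n)
             {x. \<forall>i. Js i (obs n i x) (transcript n (comm n) x) = J n x} \<ge> 1 - \<epsilon>))"

definition is_SK :: "('i \<Rightarrow> 'a) pmf \<Rightarrow> (nat \<Rightarrow> ('i, 'a) protocol) \<Rightarrow> (nat \<Rightarrow> (nat \<Rightarrow> 'i \<Rightarrow> 'a) \<Rightarrow> nat) \<Rightarrow> real \<Rightarrow> bool" where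
  "is_SK P comm K R \<longleftrightarrow> is_CR P comm K \<and>
     (\<forall>\<epsilon>::real. 0 < \<epsilon> \<longrightarrow>
        (\<forall>\<^sub>F n in sequentially.
           MI (iid P n) (K n) (transcript n (comm n)) \<le> \<epsilon> \<and>
           H (iid P n) (K n) / real n \<ge> R - \<epsilon>))"

definition parts :: "'i set set set" where
  "parts = {\<P>. partition_on UNIV \<P> \<and> card \<P> \<ge> 2}"

definition Delta :: "('i \<Rightarrow> 'a) pmf \<Rightarrow> 'i set set \<Rightarrow> real" where
  "Delta P \<P> = ((\<Sum>A\<in>\<P>. H P (\<lambda>x. restrict x A)) - H P id) / (real (card \<P>) - 1)"

definition SKcap :: "('i \<Rightarrow> 'a) pmf \<Rightarrow> real" where
  "SKcap P = Min (Delta P ` parts)"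

definition minparts :: "('i \<Rightarrow> 'a) pmf \<Rightarrow> 'i set set set" where
  "minparts P = {\<P> \<in> parts. Delta P \<P> = SKcap P}"

definition condI :: "('i \<Rightarrow> 'a) pmf \<Rightarrow> nat \<Rightarrow> ((nat \<Rightarrow> 'i \<Rightarrow> 'a) \<Rightarrow> 'l) \<Rightarrow> real" where
  "condI P n L = Max ((\<lambda>\<P>. ((\<Sum>A\<in>\<P>. condH (iid P n) (\<lambda>x t. restrict (x t) A) L)
                             - condH (iid P n) id L) / (real (card \<P>) - 1)) ` minparts P)"

definition is_CIW :: "('i \<Rightarrow> 'a) pmf \<Rightarrow> (nat \<Rightarrow> (nat \<Rightarrow> 'i \<Rightarrow> 'a) \<Rightarrow> 'l) \<Rightarrow> bool" where
  "is_CIW P L \<longleftrightarrow> (\<lambda>n. condI P n (L n) / real n) \<longlonglongrightarrow> 0"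

definition is_CI :: "('i \<Rightarrow> 'a) pmf \<Rightarrow> (nat \<Rightarrow> ('i, 'a) protocol) \<Rightarrow> (nat \<Rightarrow> (nat \<Rightarrow> 'i \<Rightarrow> 'a) \<Rightarrow> nat) \<Rightarrow> bool" where
  "is_CI P comm J \<longleftrightarrow> is_CR P comm J \<and>
     is_CIW P (\<lambda>n x. (J n x, transcript n (comm n) x))"

definition CIX :: "('i \<Rightarrow> 'a) pmf \<Rightarrow> ereal" where
  "CIX P = Inf (ereal ` {R. \<exists>comm J. is_CI P comm J \<and>
      (\<forall>\<epsilon>::real. 0 < \<epsilon> \<longrightarrow> (\<forall>\<^sub>F n in sequentially.
         H (iid P n) (\<lambda>x. (J n x, transcript n (comm n) x)) / real n \<le> R + \<epsilon>))})"

definition R_SK :: "('i \<Rightarrow> 'a) pmf \<Rightarrow> ereal" where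
  "R_SK P = Inf (ereal ` {R. R \<ge> 0 \<and> (\<exists>comm K. is_SK P comm K (SKcap P) \<and>
      (\<forall>\<epsilon>::real. 0 < \<epsilon> \<longrightarrow> (\<forall>\<^sub>F n in sequentially.
         log 2 (real (range_card n (comm n))) / real n \<le> R + \<epsilon>)))})"

definition R_CI :: "('i \<Rightarrow> 'a) pmf \<Rightarrow> ereal" where
  "R_CI P = Inf (ereal ` {R. R \<ge> 0 \<and> (\<exists>comm J. is_CI P comm J \<and>
      (\<forall>\<epsilon>::real. 0 < \<epsilon> \<longrightarrow> (\<forall>\<^sub>F n in sequentially.
         log 2 (real (range_card n (comm n))) / real n \<le> R + \<epsilon>)))})"

end

theory Submission
  imports Defs
begin

definition EE :: "'s pmf \<Rightarrow> ('s \<Rightarrow> real) \<Rightarrow> real" where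
  "EE p \<phi> = (\<Sum>x\<in>set_pmf p. pmf p x * \<phi> x)"

lemma Ex_integral: "finite (set_pmf p) \<Longrightarrow> EE p \<phi> = measure_pmf.expectation p \<phi>"
  unfolding EE_def by (subst integral_measure_pmf_real[where A="set_pmf p"]) (auto simp: mult.commute)

lemma Ex_map: "finite (set_pmf p) \<Longrightarrow> EE (map_pmf f p) \<phi> = EE p (\<lambda>x. \<phi> (f x))"
  by (simp add: Ex_integral)

definition pf :: "'s pmf \<Rightarrow> ('s \<Rightarrow> 'b) \<Rightarrow> 's \<Rightarrow> real" where
  "pf p f x = pmf (map_pmf f p) (f x)"

lemma ent_Ex: "ent q = EE q (\<lambda>y. - log 2 (pmf q y))"
  unfolding ent_def EE_def by simp

lemma H_alt: "finite (set_pmf p) \<Longrightarrow> H p f = EE p (\<lambda>x. - log 2 (pf p f x))"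
  unfolding H_def ent_Ex pf_def by (simp add: Ex_map)

lemma pf_pos: "x \<in> set_pmf p \<Longrightarrow> 0 < pf p f x"
  unfolding pf_def by (intro pmf_positive) simp

lemma pf_le1: "pf p f x \<le> 1"
  unfolding pf_def by (rule pmf_le_1)

lemma pf_mono:
  assumes "\<forall>y\<in>set_pmf p. g y = g x \<longrightarrow> f y = f x"
  shows "pf p g x \<le> pf p f x"
proof -
  have "pf p g x = measure p (g -` {g x} \<inter> set_pmf p)"
    unfolding pf_def pmf_map measure_Int_set_pmf ..
  also have "\<dots> \<le> measure p (f -` {f x} \<inter> set_pmf p)"
    using assms by (intro measure_pmf.finite_measure_mono) auto
  also have "\<dots> = pf p f x"
    unfolding pf_def pmf_map measure_Int_set_pmf ..
  finally show ?thesis .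
qed

lemma H_mono_det:
  assumes "finite (set_pmf p)" "\<forall>x\<in>set_pmf p. \<forall>y\<in>set_pmf p. g x = g y \<longrightarrow> f x = f y"
  shows "H p f \<le> H p g"
  unfolding H_alt[OF assms(1)] EE_def
proof (rule sum_mono)
  fix x assume x: "x \<in> set_pmf p"
  have "\<forall>y\<in>set_pmf p. g y = g x \<longrightarrow> f y = f x" using assms(2) x by blast
  hence le: "pf p g x \<le> pf p f x" by (rule pf_mono)
  have pos: "0 < pf p g x" using x by (rule pf_pos)
  have "log 2 (pf p g x) \<le> log 2 (pf p f x)"
    using le pos by (subst log_le_cancel_iff) auto
  hence "- log 2 (pf p f x) \<le> - log 2 (pf p g x)" by linarith
  thus "pmf p x * - log 2 (pf p f x) \<le> pmf p x * - log 2 (pf p g x)"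
    by (rule mult_left_mono) simp
qed

lemma H_cong_det:
  assumes "finite (set_pmf p)" "\<forall>x\<in>set_pmf p. \<forall>y\<in>set_pmf p. g x = g y \<longleftrightarrow> f x = f y"
  shows "H p f = H p g"
proof (rule order_antisym)
  show "H p f \<le> H p g" using assms(2) by (intro H_mono_det[OF assms(1)]) blast
  show "H p g \<le> H p f" using assms(2) by (intro H_mono_det[OF assms(1)]) blast
qed

lemma H_nonneg: "finite (set_pmf p) \<Longrightarrow> 0 \<le> H p f"
  unfolding H_alt EE_def
proof (intro sum_nonneg)
  fix x assume "x \<in> set_pmf p"
  hence "0 < pf p f x" "pf p f x \<le> 1" using pf_pos[of x p f] pf_le1[of p f x] by auto
  hence l: "log 2 (pf p f x) \<le> 0" by simp
  show "0 \<le> pmf p x * - log 2 (pf p f x)" using mult_nonneg_nonpos[OF pmf_nonneg[of p x] l] by simp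
qed

lemma H_const: "H p (\<lambda>_. c) = 0"
  unfolding H_def ent_def by simp

lemma gibbs:
  assumes fin: "finite (set_pmf q)" and pos: "\<forall>y\<in>set_pmf q. 0 < r y"
    and sum: "(\<Sum>y\<in>set_pmf q. r y) \<le> 1"
  shows "ent q \<le> EE q (\<lambda>y. - log 2 (r y))"
proof -
  have s1: "(\<Sum>y\<in>set_pmf q. pmf q y) = 1" using fin by (rule sum_pmf_eq_1) auto
  have "ent q - EE q (\<lambda>y. - log 2 (r y)) = (\<Sum>y\<in>set_pmf q. pmf q y * log 2 (r y / pmf q y))"
    unfolding ent_Ex EE_def sum_subtractf[symmetric]
  proof (intro sum.cong refl)
    fix y assume y: "y \<in> set_pmf q"
    have "0 < pmf q y" using y by (rule pmf_positive)
    hence e: "log 2 (r y / pmf q y) = log 2 (r y) - log 2 (pmf q y)"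
      using pos y by (subst log_divide) auto
    show "pmf q y * - log 2 (pmf q y) - pmf q y * - log 2 (r y) = pmf q y * log 2 (r y / pmf q y)"
      by (subst e) (simp add: algebra_simps)
  qed
  also have "\<dots> \<le> (\<Sum>y\<in>set_pmf q. pmf q y * ((r y / pmf q y - 1) / ln 2))"
  proof (intro sum_mono mult_left_mono)
    fix y assume y: "y \<in> set_pmf q"
    have "0 < pmf q y" using y by (rule pmf_positive)
    hence "0 < r y / pmf q y" using pos y by simp
    hence "ln (r y / pmf q y) \<le> r y / pmf q y - 1" by (rule ln_le_minus_one)
    thus "log 2 (r y / pmf q y) \<le> (r y / pmf q y - 1) / ln 2"
      unfolding log_def by (simp add: divide_right_mono)
  qed auto
  also have "\<dots> = ((\<Sum>y\<in>set_pmf q. r y) - (\<Sum>y\<in>set_pmf q. pmf q y)) / ln 2"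
    unfolding sum_subtractf[symmetric] sum_divide_distrib
  proof (intro sum.cong refl)
    fix y assume y: "y \<in> set_pmf q"
    have "0 < pmf q y" using y by (rule pmf_positive)
    thus "pmf q y * ((r y / pmf q y - 1) / ln 2) = (r y - pmf q y) / ln 2"
      by (simp add: field_simps)
  qed
  also have "\<dots> = ((\<Sum>y\<in>set_pmf q. r y) - 1) / ln 2" using s1 by simp
  also have "((\<Sum>y\<in>set_pmf q. r y) - 1) / ln 2 \<le> 0"
    using sum by (simp add: divide_nonpos_pos)
  finally show ?thesis by linarith
qed


lemma pmf_map_snd_sum:
  assumes "finite A" "fst ` set_pmf M \<subseteq> A"
  shows "pmf (map_pmf snd M) b = (\<Sum>a\<in>A. pmf M (a, b))"
proof -
  have "pmf (map_pmf snd M) b = measure M (snd -` {b})" by (rule pmf_map)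
  also have "\<dots> = measure M (A \<times> {b})"
    using assms(2) by (intro measure_prob_cong_0) (force simp: set_pmf_iff[symmetric])+
  also have "\<dots> = sum (pmf M) (A \<times> {b})"
    using assms(1) by (intro measure_measure_pmf_finite) simp
  also have "A \<times> {b} = (\<lambda>a. (a, b)) ` A" by auto
  also have "sum (pmf M) \<dots> = (\<Sum>a\<in>A. pmf M (a, b))"
    by (simp add: sum.reindex inj_on_def)
  finally show ?thesis .
qed

lemma pmf_map_fst_sum:
  assumes "finite B" "snd ` set_pmf M \<subseteq> B"
  shows "pmf (map_pmf fst M) a = (\<Sum>b\<in>B. pmf M (a, b))"
proof -
  have "pmf (map_pmf fst M) a = measure M (fst -` {a})" by (rule pmf_map)
  also have "\<dots> = measure M ({a} \<times> B)"
    using assms(2) by (intro measure_prob_cong_0) (force simp: set_pmf_iff[symmetric])+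
  also have "\<dots> = sum (pmf M) ({a} \<times> B)"
    using assms(1) by (intro measure_measure_pmf_finite) simp
  also have "{a} \<times> B = (\<lambda>b. (a, b)) ` B" by auto
  also have "sum (pmf M) \<dots> = (\<Sum>b\<in>B. pmf M (a, b))"
    by (simp add: sum.reindex inj_on_def)
  finally show ?thesis .
qed

lemma marg1:
  assumes "finite (set_pmf p)"
  shows "(\<Sum>a\<in>f ` set_pmf p. pmf (map_pmf (\<lambda>x. (f x, g x)) p) (a, b)) = pmf (map_pmf g p) b"
proof -
  have "map_pmf g p = map_pmf snd (map_pmf (\<lambda>x. (f x, g x)) p)" by (simp add: pmf.map_comp o_def)
  thus ?thesis using assms by (simp add: pmf_map_snd_sum[where A="f ` set_pmf p"] image_image)
qed

lemma marg2:
  assumes "finite (set_pmf p)"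
  shows "(\<Sum>c\<in>h ` set_pmf p. pmf (map_pmf (\<lambda>x. (g x, h x)) p) (b, c)) = pmf (map_pmf g p) b"
proof -
  have "map_pmf g p = map_pmf fst (map_pmf (\<lambda>x. (g x, h x)) p)" by (simp add: pmf.map_comp o_def)
  thus ?thesis using assms by (simp add: pmf_map_fst_sum[where B="h ` set_pmf p"] image_image)
qed
lemma submod:
  assumes fin: "finite (set_pmf p)"
  shows "H p (\<lambda>x. (f x, g x, h x)) + H p g \<le> H p (\<lambda>x. (f x, g x)) + H p (\<lambda>x. (g x, h x))"
proof -
  define S where "S = set_pmf p"
  define t where "t = (\<lambda>x. (f x, g x, h x))"
  define q where "q = map_pmf t p"
  define Mfg where "Mfg = map_pmf (\<lambda>x. (f x, g x)) p"
  define Mgh where "Mgh = map_pmf (\<lambda>x. (g x, h x)) p"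
  define Mg where "Mg = map_pmf g p"
  define r where "r = (\<lambda>(a,b,c). pmf Mfg (a,b) * pmf Mgh (b,c) / pmf Mg b)"
  have finS: "finite S" using fin S_def by simp
  have setq: "set_pmf q = t ` S" unfolding q_def S_def by simp
  have rt: "r (t x) = pf p (\<lambda>x. (f x, g x)) x * pf p (\<lambda>x. (g x, h x)) x / pf p g x" for x
    unfolding r_def t_def pf_def Mfg_def Mgh_def Mg_def by simp
  have rpos: "\<forall>y\<in>set_pmf q. 0 < r y"
    unfolding setq S_def using rt by (auto intro!: mult_pos_pos divide_pos_pos pf_pos)
  have Mgpos: "b \<in> g ` S \<Longrightarrow> 0 < pmf Mg b" for b
    unfolding Mg_def S_def by (auto intro!: pmf_positive)
  have rnn: "0 \<le> r v" for v unfolding r_def by (auto simp: case_prod_beta)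
  have "(\<Sum>y\<in>set_pmf q. r y) \<le> (\<Sum>y\<in>f ` S \<times> (g ` S \<times> h ` S). r y)"
    using finS rnn unfolding setq t_def by (intro sum_mono2) auto
  also have "\<dots> = (\<Sum>a\<in>f ` S. \<Sum>b\<in>g ` S. \<Sum>c\<in>h ` S. r (a,b,c))"
    by (simp add: sum.cartesian_product)
  also have "\<dots> = (\<Sum>b\<in>g ` S. \<Sum>a\<in>f ` S. \<Sum>c\<in>h ` S. r (a,b,c))"
    by (rule sum.swap)
  also have "\<dots> = (\<Sum>b\<in>g ` S. (\<Sum>a\<in>f ` S. pmf Mfg (a,b)) * (\<Sum>c\<in>h ` S. pmf Mgh (b,c)) / pmf Mg b)"
    unfolding r_def by (simp add: sum_distrib_left sum_distrib_right sum_divide_distrib) (rule sum.cong[OF refl], rule sum.swap)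
  also have "\<dots> = (\<Sum>b\<in>g ` S. pmf Mg b)"
  proof (rule sum.cong[OF refl])
    fix b assume b: "b \<in> g ` S"
    have "(\<Sum>a\<in>f ` S. pmf Mfg (a,b)) = pmf Mg b"
      unfolding Mfg_def Mg_def S_def by (rule marg1[OF fin])
    moreover have "(\<Sum>c\<in>h ` S. pmf Mgh (b,c)) = pmf Mg b"
      unfolding Mgh_def Mg_def S_def by (rule marg2[OF fin])
    ultimately show "(\<Sum>a\<in>f ` S. pmf Mfg (a,b)) * (\<Sum>c\<in>h ` S. pmf Mgh (b,c)) / pmf Mg b = pmf Mg b"
      using Mgpos[OF b] by simp
  qed
  also have "\<dots> = 1" using finS unfolding Mg_def S_def by (intro sum_pmf_eq_1) auto
  finally have rsum: "(\<Sum>y\<in>set_pmf q. r y) \<le> 1" .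
  have finq: "finite (set_pmf q)" using finS setq by simp
  have "H p t = ent q" unfolding H_def q_def ..
  also have "\<dots> \<le> EE q (\<lambda>y. - log 2 (r y))" by (rule gibbs[OF finq rpos rsum])
  also have "\<dots> = EE p (\<lambda>x. - log 2 (r (t x)))" unfolding q_def by (rule Ex_map[OF fin])
  also have "\<dots> = EE p (\<lambda>x. - log 2 (pf p (\<lambda>x. (f x, g x)) x)) + EE p (\<lambda>x. - log 2 (pf p (\<lambda>x. (g x, h x)) x))
                 - EE p (\<lambda>x. - log 2 (pf p g x))"
    unfolding EE_def sum.distrib[symmetric] sum_subtractf[symmetric]
  proof (rule sum.cong[OF refl])
    fix x assume x: "x \<in> set_pmf p"
    have p1: "0 < pf p (\<lambda>x. (f x, g x)) x" "0 < pf p (\<lambda>x. (g x, h x)) x" "0 < pf p g x"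
      using x by (auto intro: pf_pos)
    show "pmf p x * - log 2 (r (t x)) = pmf p x * - log 2 (pf p (\<lambda>x. (f x, g x)) x) +
          pmf p x * - log 2 (pf p (\<lambda>x. (g x, h x)) x) - pmf p x * - log 2 (pf p g x)"
      unfolding rt using p1 by (simp add: log_mult log_divide algebra_simps)
  qed
  also have "\<dots> = H p (\<lambda>x. (f x, g x)) + H p (\<lambda>x. (g x, h x)) - H p g"
    by (simp add: H_alt[OF fin])
  finally show ?thesis unfolding t_def by simp
qed
lemma H_sub:
  assumes fin: "finite (set_pmf p)"
  shows "H p (\<lambda>x. (f x, h x)) \<le> H p f + H p h"
proof -
  have "H p (\<lambda>x. (f x, (), h x)) + H p (\<lambda>x. ()) \<le> H p (\<lambda>x. (f x, ())) + H p (\<lambda>x. ((), h x))"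
    by (rule submod[OF fin])
  moreover have "H p (\<lambda>x. (f x, (), h x)) = H p (\<lambda>x. (f x, h x))" by (rule H_cong_det[OF fin]) auto
  moreover have "H p (\<lambda>x. (f x, ())) = H p f" by (rule H_cong_det[OF fin]) auto
  moreover have "H p (\<lambda>x. ((), h x)) = H p h" by (rule H_cong_det[OF fin]) auto
  ultimately show ?thesis by (simp add: H_const)
qed

lemma H_map: "H (map_pmf \<phi> q) f = H q (\<lambda>x. f (\<phi> x))"
  unfolding H_def by (simp add: pmf.map_comp o_def)

lemma H_return: "H (return_pmf c) f = 0"
  unfolding H_def ent_def by simp

lemma ent_pair:
  assumes "finite (set_pmf p)" "finite (set_pmf q)"
  shows "ent (pair_pmf p q) = ent p + ent q"
proof -
  have sp: "(\<Sum>a\<in>set_pmf p. pmf p a) = 1" "(\<Sum>b\<in>set_pmf q. pmf q b) = 1"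
    using assms by (auto intro: sum_pmf_eq_1)
  have "ent (pair_pmf p q) = (\<Sum>a\<in>set_pmf p. \<Sum>b\<in>set_pmf q. - (pmf p a * pmf q b) * log 2 (pmf p a * pmf q b))"
    unfolding ent_def by (simp add: sum.cartesian_product) (rule sum.cong, auto simp: pmf_pair)
  also have "\<dots> = (\<Sum>a\<in>set_pmf p. \<Sum>b\<in>set_pmf q. pmf q b * (- pmf p a * log 2 (pmf p a)) + pmf p a * (- pmf q b * log 2 (pmf q b)))"
  proof (intro sum.cong refl)
    fix a b assume "a \<in> set_pmf p" "b \<in> set_pmf q"
    hence "0 < pmf p a" "0 < pmf q b" by (auto intro: pmf_positive)
    thus "- (pmf p a * pmf q b) * log 2 (pmf p a * pmf q b) = pmf q b * (- pmf p a * log 2 (pmf p a)) + pmf p a * (- pmf q b * log 2 (pmf q b))"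
      by (simp add: log_mult algebra_simps)
  qed
  also have "\<dots> = (\<Sum>a\<in>set_pmf p. (- pmf p a * log 2 (pmf p a)) + pmf p a * ent q)"
  proof (rule sum.cong[OF refl])
    fix a
    have "(\<Sum>b\<in>set_pmf q. pmf q b * (- pmf p a * log 2 (pmf p a)) + pmf p a * (- pmf q b * log 2 (pmf q b)))
       = (\<Sum>b\<in>set_pmf q. pmf q b) * (- pmf p a * log 2 (pmf p a)) + pmf p a * (\<Sum>b\<in>set_pmf q. (- pmf q b * log 2 (pmf q b)))"
      by (simp only: sum.distrib sum_distrib_left sum_distrib_right)
    also have "\<dots> = (- pmf p a * log 2 (pmf p a)) + pmf p a * ent q"
      unfolding sp ent_def by simp
    finally show "(\<Sum>b\<in>set_pmf q. pmf q b * (- pmf p a * log 2 (pmf p a)) + pmf p a * (- pmf q b * log 2 (pmf q b)))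
       = (- pmf p a * log 2 (pmf p a)) + pmf p a * ent q" .
  qed
  also have "\<dots> = (\<Sum>a\<in>set_pmf p. - pmf p a * log 2 (pmf p a)) + (\<Sum>a\<in>set_pmf p. pmf p a) * ent q"
    by (simp only: sum.distrib sum_distrib_right)
  also have "\<dots> = ent p + ent q"
    unfolding sp ent_def by simp
  finally show ?thesis .
qed

lemma H_indep:
  assumes "finite (set_pmf p)" "finite (set_pmf q)"
  shows "H (pair_pmf p q) (\<lambda>(y,z). (\<alpha> y, \<beta> z)) = H p \<alpha> + H q \<beta>"
  unfolding H_def map_pair using assms by (intro ent_pair) auto

lemma set_iid: "set_pmf (iid P n) = PiE_dflt {..<n} undefined (\<lambda>_. set_pmf P)"
  unfolding iid_def by (simp add: set_Pi_pmf o_def)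

lemma finite_iid:
  fixes P :: "('i::finite \<Rightarrow> 'a::finite) pmf"
  shows "finite (set_pmf (iid P n))"
  unfolding set_iid by (intro finite_PiE_dflt) auto

lemma card_iid:
  fixes P :: "('i::finite \<Rightarrow> 'a::finite) pmf"
  shows "card (set_pmf (iid P n)) \<le> CARD('i \<Rightarrow> 'a) ^ n"
  unfolding set_iid by (subst card_PiE_dflt) (auto intro!: power_mono card_mono)

lemma iid_Suc: "iid P (Suc n) = map_pmf (\<lambda>(y,f). f(n:=y)) (pair_pmf P (iid P n))"
  unfolding iid_def lessThan_Suc by (rule Pi_pmf_insert) auto

lemma H_iid:
  fixes P :: "('i::finite \<Rightarrow> 'a::finite) pmf"
  shows "H (iid P n) (\<lambda>x t. restrict (x t) A) = real n * H P (\<lambda>x. restrict x A)"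
proof (induction n)
  case 0
  show ?case unfolding iid_def by (simp add: H_return)
next
  case (Suc n)
  have finP: "finite (set_pmf P)" by simp
  let ?X = "\<lambda>x t. restrict (x t) A"
  have "H (iid P (Suc n)) ?X = H (pair_pmf P (iid P n)) (\<lambda>u. ?X ((\<lambda>(y,f). f(n:=y)) u))"
    unfolding iid_Suc H_map ..
  also have "\<dots> = H (pair_pmf P (iid P n)) (\<lambda>(y,f). (restrict y A, ?X f))"
  proof (rule H_cong_det)
    show "finite (set_pmf (pair_pmf P (iid P n)))" using finite_iid[of P n] by simp
    show "\<forall>u\<in>set_pmf (pair_pmf P (iid P n)). \<forall>v\<in>set_pmf (pair_pmf P (iid P n)).
      ((\<lambda>(y,f). (restrict y A, ?X f)) u = (\<lambda>(y,f). (restrict y A, ?X f)) v) =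
      (?X ((\<lambda>(y,f). f(n:=y)) u) = ?X ((\<lambda>(y,f). f(n:=y)) v))"
    proof (intro ballI)
      fix u v assume u: "u \<in> set_pmf (pair_pmf P (iid P n))" and v: "v \<in> set_pmf (pair_pmf P (iid P n))"
      obtain y f where uu: "u = (y,f)" by (cases u)
      obtain y' f' where vv: "v = (y',f')" by (cases v)
      have fn: "f n = undefined" "f' n = undefined"
        using u v unfolding uu vv by (auto simp: set_iid PiE_dflt_def)
      show "((\<lambda>(y,f). (restrict y A, ?X f)) u = (\<lambda>(y,f). (restrict y A, ?X f)) v) =
        (?X ((\<lambda>(y,f). f(n:=y)) u) = ?X ((\<lambda>(y,f). f(n:=y)) v))"
      proof
        assume "(\<lambda>(y,f). (restrict y A, ?X f)) u = (\<lambda>(y,f). (restrict y A, ?X f)) v"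
        hence e1: "restrict y A = restrict y' A" and e2: "\<And>t. restrict (f t) A = restrict (f' t) A"
          unfolding uu vv by (auto simp: fun_eq_iff)
        show "?X ((\<lambda>(y,f). f(n:=y)) u) = ?X ((\<lambda>(y,f). f(n:=y)) v)"
          unfolding uu vv using e1 e2 by (auto simp: fun_eq_iff)
      next
        assume a: "?X ((\<lambda>(y,f). f(n:=y)) u) = ?X ((\<lambda>(y,f). f(n:=y)) v)"
        have a': "restrict ((f(n:=y)) t) A = restrict ((f'(n:=y')) t) A" for t
          using a unfolding uu vv by (simp add: fun_eq_iff)
        have e1: "restrict y A = restrict y' A" using a'[of n] by simp
        have e2: "restrict (f t) A = restrict (f' t) A" for t
        proof (cases "t = n")
          case True thus ?thesis using fn by simp
        next
          case False thus ?thesis using a'[of t] by simp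
        qed
        show "(\<lambda>(y,f). (restrict y A, ?X f)) u = (\<lambda>(y,f). (restrict y A, ?X f)) v"
          unfolding uu vv using e1 e2 by (simp add: fun_eq_iff)
      qed
    qed
  qed
  also have "\<dots> = H P (\<lambda>x. restrict x A) + H (iid P n) ?X"
    by (rule H_indep[OF finP finite_iid])
  also have "\<dots> = real (Suc n) * H P (\<lambda>x. restrict x A)"
    unfolding Suc.IH of_nat_Suc by (simp only: algebra_simps)
  finally show ?case .
qed
lemma EE_const: "finite (set_pmf q) \<Longrightarrow> EE q (\<lambda>_. c) = c"
  unfolding EE_def by (simp add: sum_distrib_right[symmetric] sum_pmf_eq_1)

lemma ent_le_log_card:
  assumes fin: "finite (set_pmf q)"
  shows "ent q \<le> log 2 (card (set_pmf q))"
proof -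
  have ne: "set_pmf q \<noteq> {}" by (rule set_pmf_not_empty)
  hence c: "0 < card (set_pmf q)" using fin by (simp add: card_gt_0_iff)
  have "ent q \<le> EE q (\<lambda>y. - log 2 (1 / real (card (set_pmf q))))"
    by (rule gibbs[OF fin]) (use c in auto)
  also have "\<dots> = log 2 (card (set_pmf q))"
    using c by (simp add: EE_const[OF fin] log_divide)
  finally show ?thesis .
qed

lemma H_le_log_card:
  assumes fin: "finite (set_pmf p)" and fB: "finite B" and B: "f ` set_pmf p \<subseteq> B"
  shows "H p f \<le> log 2 (card B)"
proof -
  have "H p f \<le> log 2 (card (set_pmf (map_pmf f p)))"
    unfolding H_def using fin by (intro ent_le_log_card) simp
  also have "\<dots> \<le> log 2 (card B)"
  proof -
    have "0 < card (set_pmf (map_pmf f p))" using fin by (simp add: card_gt_0_iff set_pmf_not_empty)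
    moreover have "card (set_pmf (map_pmf f p)) \<le> card B" using B fB by (intro card_mono) auto
    ultimately show ?thesis by simp
  qed
  finally show ?thesis .
qed

lemma H_bool_le1:
  fixes E :: "_ \<Rightarrow> bool"
  assumes fin: "finite (set_pmf p)"
  shows "H p E \<le> 1"
  using H_le_log_card[OF fin, of UNIV E] by simp

lemma fano:
  fixes J :: "'s \<Rightarrow> 'b"
  assumes fin: "finite (set_pmf p)"
    and err: "measure p {x. J x \<noteq> \<phi> (Y x)} \<le> \<delta>"
    and N: "card (J ` set_pmf p) \<le> N" "1 \<le> N"
  shows "H p (\<lambda>x. (Y x, J x)) - H p Y \<le> 2 + \<delta> * log 2 (2 * real N)"
proof -
  define S where "S = set_pmf p"
  define E where "E = (\<lambda>x. J x \<noteq> \<phi> (Y x))"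
  define J' where "J' = (\<lambda>x. if E x then Some (J x) else None)"
  define L where "L = log 2 (2 * real N)"
  have L1: "1 \<le> L" unfolding L_def using N(2) by simp
  have "H p (\<lambda>x. (Y x, J x)) \<le> H p (\<lambda>x. (J' x, (E x, Y x)))"
    by (rule H_mono_det[OF fin]) (auto simp: J'_def E_def split: if_splits)
  also have "\<dots> \<le> H p J' + H p (\<lambda>x. (E x, Y x))" by (rule H_sub[OF fin])
  also have "H p (\<lambda>x. (E x, Y x)) \<le> H p E + H p Y" by (rule H_sub[OF fin])
  also have "H p E \<le> 1" by (rule H_bool_le1[OF fin])
  finally have 1: "H p (\<lambda>x. (Y x, J x)) \<le> H p J' + 1 + H p Y" by simp
  define q where "q = map_pmf J' p"
  define r :: "'b option \<Rightarrow> real" where "r = (\<lambda>v. case v of None \<Rightarrow> 1/2 | Some _ \<Rightarrow> 1 / (2 * real N))"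
  have finq: "finite (set_pmf q)" unfolding q_def using fin by simp
  have rpos: "\<forall>y\<in>set_pmf q. 0 < r y" using N(2) unfolding r_def by (auto split: option.splits)
  have setq: "set_pmf q \<subseteq> insert None (Some ` (J ` S))"
    unfolding q_def J'_def S_def by auto
  have "(\<Sum>y\<in>set_pmf q. r y) \<le> (\<Sum>y\<in>insert None (Some ` (J ` S)). r y)"
    using setq fin unfolding S_def by (intro sum_mono2) (auto simp: r_def split: option.splits)
  also have "\<dots> = 1/2 + (\<Sum>y\<in>Some ` (J ` S). r y)"
    using fin unfolding S_def by (subst sum.insert) (auto simp: r_def)
  also have "(\<Sum>y\<in>Some ` (J ` S). r y) = real (card (J ` S)) * (1 / (2 * real N))"
    by (subst sum.reindex) (auto simp: r_def)
  also have "\<dots> \<le> real N * (1 / (2 * real N))"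
    using N unfolding S_def by (intro mult_right_mono) auto
  also have "\<dots> = 1/2" using N(2) by simp
  finally have rsum: "(\<Sum>y\<in>set_pmf q. r y) \<le> 1" by simp
  have "H p J' = ent q" unfolding H_def q_def ..
  also have "\<dots> \<le> EE q (\<lambda>y. - log 2 (r y))" by (rule gibbs[OF finq rpos rsum])
  also have "\<dots> = EE p (\<lambda>x. - log 2 (r (J' x)))" unfolding q_def by (rule Ex_map[OF fin])
  also have "\<dots> \<le> EE p (\<lambda>x. 1 + (if E x then L else 0))"
    unfolding EE_def
  proof (intro sum_mono mult_left_mono)
    fix x
    show "- log 2 (r (J' x)) \<le> 1 + (if E x then L else 0)"
      using N(2) L1 by (auto simp: J'_def r_def L_def log_divide)
  qed simp
  also have "\<dots> = 1 + L * measure p {x. E x}"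
  proof -
    have "EE p (\<lambda>x. 1 + (if E x then L else 0)) = (\<Sum>x\<in>S. pmf p x) + L * (\<Sum>x\<in>S. if E x then pmf p x else 0)"
      unfolding EE_def S_def sum_distrib_left sum.distrib[symmetric] by (intro sum.cong refl) (auto simp: algebra_simps)
    also have "(\<Sum>x\<in>S. pmf p x) = 1" unfolding S_def using fin by (intro sum_pmf_eq_1) auto
    also have "(\<Sum>x\<in>S. if E x then pmf p x else 0) = sum (pmf p) {x\<in>S. E x}"
      using fin unfolding S_def by (simp add: sum.inter_filter)
    also have "\<dots> = measure p {x\<in>S. E x}"
      using fin unfolding S_def by (simp add: measure_measure_pmf_finite)
    also have "{x\<in>S. E x} = {x. E x} \<inter> set_pmf p" unfolding S_def by auto
    also have "measure p \<dots> = measure p {x. E x}" by (rule measure_Int_set_pmf)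
    finally show ?thesis .
  qed
  also have "\<dots> \<le> 1 + L * \<delta>"
    using err L1 unfolding E_def by (intro add_left_mono mult_left_mono) auto
  finally have 2: "H p J' \<le> 1 + L * \<delta>" .
  show ?thesis using 1 2 unfolding L_def by (simp add: algebra_simps)
qed
lemma restrict_insert_eq:
  "(restrict F (insert a B) = restrict G (insert a B)) \<longleftrightarrow> (F a = G a \<and> restrict F B = restrict G B)"
proof
  assume e: "restrict F (insert a B) = restrict G (insert a B)"
  have "F a = G a" using fun_cong[OF e, of a] by simp
  moreover have "restrict F B = restrict G B"
  proof
    fix z show "restrict F B z = restrict G B z"
      using fun_cong[OF e, of z] by (cases "z \<in> B") auto
  qed
  ultimately show "F a = G a \<and> restrict F B = restrict G B" ..
next
  assume e: "F a = G a \<and> restrict F B = restrict G B"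
  show "restrict F (insert a B) = restrict G (insert a B)"
  proof
    fix z show "restrict F (insert a B) z = restrict G (insert a B) z"
    proof (cases "z = a")
      case True thus ?thesis using e by simp
    next
      case False
      have "restrict F B z = restrict G B z" using e by simp
      thus ?thesis using False by (cases "z \<in> B") auto
    qed
  qed
qed

lemma cond_subadd:
  assumes fin: "finite (set_pmf p)" and fB: "finite B"
  shows "H p (\<lambda>x. (restrict (\<lambda>A. Z A x) B, L x)) - H p L \<le> (\<Sum>A\<in>B. H p (\<lambda>x. (Z A x, L x)) - H p L)"
  using fB
proof (induction B rule: finite_induct)
  case empty
  have "H p (\<lambda>x. (restrict (\<lambda>A. Z A x) {}, L x)) = H p L" by (rule H_cong_det[OF fin]) auto
  thus ?case by (simp only: sum.empty diff_self order_refl)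
next
  case (insert A B)
  have "H p (\<lambda>x. (restrict (\<lambda>A. Z A x) (insert A B), L x)) = H p (\<lambda>x. (Z A x, L x, restrict (\<lambda>A. Z A x) B))"
  proof (rule H_cong_det[OF fin], intro ballI)
    fix x y
    show "((Z A x, L x, restrict (\<lambda>A. Z A x) B) = (Z A y, L y, restrict (\<lambda>A. Z A y) B)) =
          ((restrict (\<lambda>A. Z A x) (insert A B), L x) = (restrict (\<lambda>A. Z A y) (insert A B), L y))"
      by (simp add: restrict_insert_eq) blast
  qed
  also have "\<dots> \<le> H p (\<lambda>x. (Z A x, L x)) + H p (\<lambda>x. (L x, restrict (\<lambda>A. Z A x) B)) - H p L"
    using submod[OF fin, of "\<lambda>x. Z A x" L "\<lambda>x. restrict (\<lambda>A. Z A x) B"] by simp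
  also have "H p (\<lambda>x. (L x, restrict (\<lambda>A. Z A x) B)) = H p (\<lambda>x. (restrict (\<lambda>A. Z A x) B, L x))"
    by (rule H_cong_det[OF fin]) auto
  finally have X: "H p (\<lambda>x. (restrict (\<lambda>A. Z A x) (insert A B), L x)) \<le> H p (\<lambda>x. (Z A x, L x)) + H p (\<lambda>x. (restrict (\<lambda>A. Z A x) B, L x)) - H p L" .
  have S: "(\<Sum>A'\<in>insert A B. H p (\<lambda>x. (Z A' x, L x)) - H p L) = (H p (\<lambda>x. (Z A x, L x)) - H p L) + (\<Sum>A'\<in>B. H p (\<lambda>x. (Z A' x, L x)) - H p L)"
    by (rule sum.insert[OF insert.hyps])
  show ?case unfolding S using X insert.IH by linarith
qed

lemma cond_subadd':
  assumes fin: "finite (set_pmf p)" and fB: "finite B"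
    and det: "\<forall>x\<in>set_pmf p. \<forall>y\<in>set_pmf p. (\<forall>A\<in>B. Z A x = Z A y) \<longrightarrow> W x = W y"
  shows "H p (\<lambda>x. (W x, L x)) - H p L \<le> (\<Sum>A\<in>B. H p (\<lambda>x. (Z A x, L x)) - H p L)"
proof -
  have "H p (\<lambda>x. (W x, L x)) \<le> H p (\<lambda>x. (restrict (\<lambda>A. Z A x) B, L x))"
  proof (rule H_mono_det[OF fin], intro ballI impI)
    fix x y assume x: "x \<in> set_pmf p" and y: "y \<in> set_pmf p"
      and e: "(restrict (\<lambda>A. Z A x) B, L x) = (restrict (\<lambda>A. Z A y) B, L y)"
    have "\<forall>A\<in>B. Z A x = Z A y"
    proof
      fix A assume "A \<in> B"
      have "restrict (\<lambda>A. Z A x) B = restrict (\<lambda>A. Z A y) B" using e by simp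
      from fun_cong[OF this, of A] show "Z A x = Z A y" using \<open>A \<in> B\<close> by simp
    qed
    hence "W x = W y" using det x y by blast
    moreover have "L x = L y" using e by simp
    ultimately show "(W x, L x) = (W y, L y)" by simp
  qed
  thus ?thesis using cond_subadd[OF fin fB, of Z L] by simp
qed

lemma interactive:
  fixes Y :: "'s \<Rightarrow> 'i \<Rightarrow> nat \<Rightarrow> 'a" and Z :: "'i set \<Rightarrow> 's \<Rightarrow> 'z"
  assumes fin: "finite (set_pmf p)" and fP: "finite Pt"
    and cover: "\<And>i. \<exists>A\<in>Pt. i \<in> A"
    and disj: "\<And>i A B. A \<in> Pt \<Longrightarrow> B \<in> Pt \<Longrightarrow> i \<in> A \<Longrightarrow> i \<in> B \<Longrightarrow> A = B"
    and det: "\<And>i A x y. A \<in> Pt \<Longrightarrow> i \<in> A \<Longrightarrow> x \<in> set_pmf p \<Longrightarrow> y \<in> set_pmf p \<Longrightarrow> Z A x = Z A y \<Longrightarrow> Y x i = Y y i"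
  shows "(\<Sum>A\<in>Pt. H p (\<lambda>x. (Z A x, run \<pi> (Y x) (h x))) - H p (\<lambda>x. (Z A x, h x)))
         \<le> (real (card Pt) - 1) * (H p (\<lambda>x. run \<pi> (Y x) (h x)) - H p h)"
proof (induction \<pi> arbitrary: h)
  case Nil
  show ?case by simp
next
  case (Cons c ps)
  obtain i g where c: "c = (i, g)" by (cases c)
  define h' where "h' = (\<lambda>x. h x @ [g (Y x i) (h x)])"
  have run: "run (c # ps) (Y x) (h x) = run ps (Y x) (h' x)" for x
    unfolding c h'_def by simp
  obtain A0 where A0: "A0 \<in> Pt" "i \<in> A0" using cover by blast
  have step: "(\<Sum>A\<in>Pt. H p (\<lambda>x. (Z A x, h' x)) - H p (\<lambda>x. (Z A x, h x)))
              \<le> (real (card Pt) - 1) * (H p h' - H p h)"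
  proof -
    have d0: "H p (\<lambda>x. (Z A0 x, h' x)) - H p (\<lambda>x. (Z A0 x, h x)) = 0"
    proof -
      have "H p (\<lambda>x. (Z A0 x, h' x)) = H p (\<lambda>x. (Z A0 x, h x))"
      proof (rule H_cong_det[OF fin], intro ballI)
        fix x y assume x: "x \<in> set_pmf p" and y: "y \<in> set_pmf p"
        show "((Z A0 x, h x) = (Z A0 y, h y)) = ((Z A0 x, h' x) = (Z A0 y, h' y))"
          using det[OF A0 x y] unfolding h'_def by auto
      qed
      thus ?thesis by simp
    qed
    have dA: "H p (\<lambda>x. (Z A x, h' x)) - H p (\<lambda>x. (Z A x, h x)) \<le> H p h' - H p h" for A
    proof -
      have "H p (\<lambda>x. (Z A x, h x, g (Y x i) (h x))) + H p h \<le> H p (\<lambda>x. (Z A x, h x)) + H p (\<lambda>x. (h x, g (Y x i) (h x)))"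
        by (rule submod[OF fin])
      moreover have "H p (\<lambda>x. (Z A x, h x, g (Y x i) (h x))) = H p (\<lambda>x. (Z A x, h' x))"
        by (rule H_cong_det[OF fin]) (auto simp: h'_def)
      moreover have "H p (\<lambda>x. (h x, g (Y x i) (h x))) = H p h'"
        by (rule H_cong_det[OF fin]) (auto simp: h'_def)
      ultimately show ?thesis by simp
    qed
    have "(\<Sum>A\<in>Pt. H p (\<lambda>x. (Z A x, h' x)) - H p (\<lambda>x. (Z A x, h x)))
        = (H p (\<lambda>x. (Z A0 x, h' x)) - H p (\<lambda>x. (Z A0 x, h x))) + (\<Sum>A\<in>Pt - {A0}. H p (\<lambda>x. (Z A x, h' x)) - H p (\<lambda>x. (Z A x, h x)))"
      using A0 fP by (simp add: sum.remove)
    also have "\<dots> \<le> 0 + (\<Sum>A\<in>Pt - {A0}. H p h' - H p h)"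
      unfolding d0 by (intro add_left_mono sum_mono dA)
    also have "\<dots> = (real (card Pt) - 1) * (H p h' - H p h)"
    proof -
      have "card Pt \<noteq> 0" using A0 fP by auto
      hence "1 \<le> card Pt" by linarith
      thus ?thesis using A0 fP by (simp add: card_Diff_singleton of_nat_diff)
    qed
    finally show ?thesis .
  qed
  have ih: "(\<Sum>A\<in>Pt. H p (\<lambda>x. (Z A x, run ps (Y x) (h' x))) - H p (\<lambda>x. (Z A x, h' x)))
         \<le> (real (card Pt) - 1) * (H p (\<lambda>x. run ps (Y x) (h' x)) - H p h')"
    by (rule Cons.IH)
  have "(\<Sum>A\<in>Pt. H p (\<lambda>x. (Z A x, run (c # ps) (Y x) (h x))) - H p (\<lambda>x. (Z A x, h x)))
      = (\<Sum>A\<in>Pt. H p (\<lambda>x. (Z A x, run ps (Y x) (h' x))) - H p (\<lambda>x. (Z A x, h' x)))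
        + (\<Sum>A\<in>Pt. H p (\<lambda>x. (Z A x, h' x)) - H p (\<lambda>x. (Z A x, h x)))"
    unfolding run sum.distrib[symmetric] by (intro sum.cong) auto
  also have "\<dots> \<le> (real (card Pt) - 1) * (H p (\<lambda>x. run ps (Y x) (h' x)) - H p h')
                 + (real (card Pt) - 1) * (H p h' - H p h)"
    by (intro add_mono ih step)
  also have "\<dots> = (real (card Pt) - 1) * (H p (\<lambda>x. run (c # ps) (Y x) (h x)) - H p h)"
    unfolding run by (simp add: algebra_simps)
  finally show ?case .
qed
lemma parts_facts:
  fixes Pt :: "'i::finite set set"
  assumes "Pt \<in> parts"
  shows "finite Pt" "\<And>i. \<exists>A\<in>Pt. i \<in> A"
    "\<And>i A B. A \<in> Pt \<Longrightarrow> B \<in> Pt \<Longrightarrow> i \<in> A \<Longrightarrow> i \<in> B \<Longrightarrow> A = B"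
    "2 \<le> card Pt"
proof -
  show "finite Pt" by (rule finite_subset[of _ UNIV]) auto
  have pa: "partition_on UNIV Pt" using assms unfolding parts_def by simp
  show "\<exists>A\<in>Pt. i \<in> A" for i using pa unfolding partition_on_def by blast
  show "A = B" if "A \<in> Pt" "B \<in> Pt" "i \<in> A" "i \<in> B" for i A B
    using pa that unfolding partition_on_def disjoint_def by blast
  show "2 \<le> card Pt" using assms unfolding parts_def by simp
qed

lemma parts_ne:
  assumes "CARD('i::finite) \<ge> 2"
  shows "(parts :: 'i set set set) \<noteq> {}"
proof -
  obtain i0 :: 'i where True by simp
  have "\<exists>j::'i. j \<noteq> i0"
  proof (rule ccontr)
    assume "\<not> (\<exists>j::'i. j \<noteq> i0)"
    hence u: "(UNIV::'i set) = {i0}" by auto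
    have "card (UNIV::'i set) = 1" unfolding u by simp
    thus False using assms by simp
  qed
  then obtain j where j: "j \<noteq> i0" by blast
  define Pt where "Pt = {{i0}, - {i0} :: 'i set}"
  have ne: "{i0} \<noteq> - {i0}" by auto
  have "partition_on UNIV Pt"
    unfolding Pt_def partition_on_def disjoint_def using j by auto
  moreover have "card Pt = 2" unfolding Pt_def using ne by simp
  ultimately have "Pt \<in> parts" unfolding parts_def by simp
  thus ?thesis by blast
qed

lemma finite_parts: "finite (parts :: 'i::finite set set set)"
  by (rule finite_subset[of _ UNIV]) auto

lemma minparts_ne:
  fixes P :: "('i::finite \<Rightarrow> 'a) pmf"
  assumes "CARD('i) \<ge> 2"
  shows "minparts P \<noteq> {}" "finite (minparts P)"
proof -
  have "SKcap P \<in> Delta P ` parts"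
    unfolding SKcap_def using parts_ne[OF assms] finite_parts by (intro Min_in) auto
  then obtain Pt where "Pt \<in> parts" "Delta P Pt = SKcap P" by auto
  thus "minparts P \<noteq> {}" unfolding minparts_def by auto
  show "finite (minparts P)" unfolding minparts_def using finite_parts by simp
qed

lemma XA_UNIV: "(\<lambda>x t. restrict (x t) UNIV) = id"
  by (auto simp: fun_eq_iff restrict_def)

lemma restrict_UNIV': "(\<lambda>x. restrict x UNIV) = id"
  by (auto simp: fun_eq_iff restrict_def)

lemma block_bound:
  fixes P :: "('i::finite \<Rightarrow> 'a::finite) pmf" and J :: "(nat \<Rightarrow> 'i \<Rightarrow> 'a) \<Rightarrow> 'j"
  assumes Pt: "Pt \<in> parts"
    and fano: "\<forall>A\<in>Pt. H (iid P n) (\<lambda>x. ((\<lambda>t. restrict (x t) A), (J x, transcript n \<pi> x)))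
                    - H (iid P n) (\<lambda>x. ((\<lambda>t. restrict (x t) A), transcript n \<pi> x)) \<le> \<delta>"
  shows "0 \<le> (\<Sum>A\<in>Pt. condH (iid P n) (\<lambda>x t. restrict (x t) A) (\<lambda>x. (J x, transcript n \<pi> x)))
              - condH (iid P n) id (\<lambda>x. (J x, transcript n \<pi> x))"
    and "(\<Sum>A\<in>Pt. condH (iid P n) (\<lambda>x t. restrict (x t) A) (\<lambda>x. (J x, transcript n \<pi> x)))
              - condH (iid P n) id (\<lambda>x. (J x, transcript n \<pi> x))
         \<le> (real (card Pt) - 1) * (real n * Delta P Pt + H (iid P n) (transcript n \<pi>)
              - H (iid P n) (\<lambda>x. (J x, transcript n \<pi> x))) + real (card Pt) * \<delta>"
proof -
  define p where "p = iid P n"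
  define F where "F = transcript n \<pi>"
  define L where "L = (\<lambda>x. (J x, F x))"
  define XA :: "'i set \<Rightarrow> (nat \<Rightarrow> 'i \<Rightarrow> 'a) \<Rightarrow> nat \<Rightarrow> 'i \<Rightarrow> 'a" where "XA = (\<lambda>A x t. restrict (x t) A)"
  define k where "k = card Pt"
  have fin: "finite (set_pmf p)" unfolding p_def by (rule finite_iid)
  note pf = parts_facts[OF Pt]
  have k2: "2 \<le> k" unfolding k_def by (rule pf(4))
  have detid: "x = y" if "\<forall>A\<in>Pt. XA A x = XA A y" for x y :: "nat \<Rightarrow> 'i \<Rightarrow> 'a"
  proof (intro ext)
    fix t i
    obtain A where A: "A \<in> Pt" "i \<in> A" using pf(2) by blast
    have "XA A x t i = XA A y t i" using that A by simp
    thus "x t i = y t i" using A unfolding XA_def by simp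
  qed
  have "H p (\<lambda>x. (id x, L x)) - H p L \<le> (\<Sum>A\<in>Pt. H p (\<lambda>x. (XA A x, L x)) - H p L)"
    using detid by (intro cond_subadd'[OF fin pf(1)]) auto
  thus "0 \<le> (\<Sum>A\<in>Pt. condH (iid P n) (\<lambda>x t. restrict (x t) A) (\<lambda>x. (J x, transcript n \<pi> x)))
              - condH (iid P n) id (\<lambda>x. (J x, transcript n \<pi> x))"
    unfolding condH_def p_def L_def F_def XA_def by simp
  have Hid: "H p (\<lambda>x. (id x, L x)) = H p id" by (rule H_cong_det[OF fin]) (auto simp: L_def)
  have c1: "H p (\<lambda>x. (XA A x, L x)) - H p L \<le> H p (\<lambda>x. (XA A x, F x)) + \<delta> - H p L" if "A \<in> Pt" for A
    using fano that unfolding p_def L_def F_def XA_def by auto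
  have det: "(\<lambda>x i. obs n i x) x i = (\<lambda>x i. obs n i x) y i"
    if "A \<in> Pt" "i \<in> A" "x \<in> set_pmf p" "y \<in> set_pmf p" "XA A x = XA A y" for i A x y
  proof -
    have "x t i = y t i" for t
      using fun_cong[OF fun_cong[OF that(5), of t], of i] that(2) unfolding XA_def by simp
    thus ?thesis unfolding obs_def by (auto simp: fun_eq_iff)
  qed
  have inter: "(\<Sum>A\<in>Pt. H p (\<lambda>x. (XA A x, run \<pi> (\<lambda>i. obs n i x) [])) - H p (\<lambda>x. (XA A x, ([]::nat list))))
         \<le> (real (card Pt) - 1) * (H p (\<lambda>x. run \<pi> (\<lambda>i. obs n i x) []) - H p (\<lambda>_. ([]::nat list)))"
  proof (rule interactive[where Z=XA and Y="\<lambda>x i. obs n i x" and h="\<lambda>_. []" and p=p and Pt=Pt and \<pi>=\<pi>])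
    show "finite (set_pmf p)" by (rule fin)
    show "finite Pt" by (rule pf(1))
    show "\<exists>A\<in>Pt. i \<in> A" for i by (rule pf(2))
    show "A = B" if "A\<in>Pt" "B\<in>Pt" "i\<in>A" "i\<in>B" for i A B using pf(3) that by blast
    show "obs n i x = obs n i y" if "A \<in> Pt" "i \<in> A" "x \<in> set_pmf p" "y \<in> set_pmf p" "XA A x = XA A y"
      for i A x y using det[OF that] by simp
  qed
  have e1: "H p (\<lambda>x. (XA A x, (\<lambda>_. ([]::nat list)) x)) = H p (XA A)" for A
    by (rule H_cong_det[OF fin]) auto
  have inter': "(\<Sum>A\<in>Pt. H p (\<lambda>x. (XA A x, F x)) - H p (XA A)) \<le> (real k - 1) * H p F"
    using inter unfolding e1 H_const F_def transcript_def k_def by simp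
  have iidsum: "(\<Sum>A\<in>Pt. H p (XA A)) - H p id = real n * ((real k - 1) * Delta P Pt)"
  proof -
    have "(\<Sum>A\<in>Pt. H p (XA A)) - H p id = (\<Sum>A\<in>Pt. H p (XA A)) - H p (XA UNIV)"
      unfolding XA_def XA_UNIV ..
    also have "\<dots> = real n * ((\<Sum>A\<in>Pt. H P (\<lambda>x. restrict x A)) - H P (\<lambda>x. restrict x UNIV))"
      unfolding p_def XA_def H_iid by (simp add: sum_distrib_left algebra_simps)
    also have "(\<Sum>A\<in>Pt. H P (\<lambda>x. restrict x A)) - H P (\<lambda>x. restrict x UNIV) = (real k - 1) * Delta P Pt"
      unfolding Delta_def restrict_UNIV' k_def using k2 unfolding k_def by simp
    finally show ?thesis .
  qed
  have "(\<Sum>A\<in>Pt. condH p (XA A) L) - condH p id L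
      = (\<Sum>A\<in>Pt. H p (\<lambda>x. (XA A x, L x)) - H p L) - (H p id - H p L)"
    unfolding condH_def Hid ..
  also have "\<dots> \<le> (\<Sum>A\<in>Pt. H p (\<lambda>x. (XA A x, F x)) + \<delta> - H p L) - (H p id - H p L)"
    using c1 by (intro diff_right_mono sum_mono) auto
  also have "\<dots> = (\<Sum>A\<in>Pt. H p (\<lambda>x. (XA A x, F x)) - H p (XA A)) + ((\<Sum>A\<in>Pt. H p (XA A)) - H p id)
                   + real k * \<delta> - (real k - 1) * H p L"
    unfolding k_def by (simp add: sum.distrib sum_subtractf algebra_simps)
  also have "\<dots> \<le> (real k - 1) * H p F + real n * ((real k - 1) * Delta P Pt) + real k * \<delta> - (real k - 1) * H p L"
    unfolding iidsum using inter' by linarith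
  also have "\<dots> = (real k - 1) * (real n * Delta P Pt + H p F - H p L) + real k * \<delta>"
    by (simp add: algebra_simps)
  finally show "(\<Sum>A\<in>Pt. condH (iid P n) (\<lambda>x t. restrict (x t) A) (\<lambda>x. (J x, transcript n \<pi> x)))
              - condH (iid P n) id (\<lambda>x. (J x, transcript n \<pi> x))
         \<le> (real (card Pt) - 1) * (real n * Delta P Pt + H (iid P n) (transcript n \<pi>)
              - H (iid P n) (\<lambda>x. (J x, transcript n \<pi> x))) + real (card Pt) * \<delta>"
    unfolding p_def L_def F_def XA_def k_def .
qed
lemma fano_block:
  fixes P :: "('i::finite \<Rightarrow> 'a::finite) pmf" and J :: "(nat \<Rightarrow> 'i \<Rightarrow> 'a) \<Rightarrow> 'j"
  assumes iA: "i \<in> A"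
    and good: "measure (iid P n) {x. \<forall>i. Js i (obs n i x) (transcript n \<pi> x) = J x} \<ge> 1 - \<epsilon>"
  shows "H (iid P n) (\<lambda>x. ((\<lambda>t. restrict (x t) A), (J x, transcript n \<pi> x)))
       - H (iid P n) (\<lambda>x. ((\<lambda>t. restrict (x t) A), transcript n \<pi> x))
     \<le> 2 + \<epsilon> * log 2 (2 * real (CARD('i \<Rightarrow> 'a) ^ n))"
proof -
  define p where "p = iid P n"
  define Y where "Y = (\<lambda>x. ((\<lambda>t. restrict (x t) A), transcript n \<pi> x))"
  define \<phi> where "\<phi> = (\<lambda>(z :: nat \<Rightarrow> 'i \<Rightarrow> 'a, f). Js i (\<lambda>t. if t < n then z t i else undefined) f)"
  have fin: "finite (set_pmf p)" unfolding p_def by (rule finite_iid)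
  have phiY: "\<phi> (Y x) = Js i (obs n i x) (transcript n \<pi> x)" for x
    unfolding \<phi>_def Y_def obs_def using iA by (simp add: restrict_def cong: if_cong)
  define G where "G = {x. \<forall>i. Js i (obs n i x) (transcript n \<pi> x) = J x}"
  have "measure p {x. J x \<noteq> \<phi> (Y x)} \<le> measure p (UNIV - G)"
    unfolding phiY G_def by (intro measure_pmf.finite_measure_mono) auto
  also have "\<dots> = 1 - measure p G"
    using measure_pmf.prob_compl[of G p] by simp
  also have "\<dots> \<le> \<epsilon>" using good unfolding p_def G_def by simp
  finally have err: "measure p {x. J x \<noteq> \<phi> (Y x)} \<le> \<epsilon>" .
  have c1: "1 \<le> CARD('i \<Rightarrow> 'a)" by (simp add: Suc_leI)
  hence N1: "1 \<le> CARD('i \<Rightarrow> 'a) ^ n" by simp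
  have "card (J ` set_pmf p) \<le> card (set_pmf p)" by (rule card_image_le[OF fin])
  also have "\<dots> \<le> CARD('i \<Rightarrow> 'a) ^ n" unfolding p_def by (rule card_iid)
  finally have N: "card (J ` set_pmf p) \<le> CARD('i \<Rightarrow> 'a) ^ n" .
  have "H p (\<lambda>x. (Y x, J x)) - H p Y \<le> 2 + \<epsilon> * log 2 (2 * real (CARD('i \<Rightarrow> 'a) ^ n))"
    by (rule fano[where J=J and Y=Y and \<phi>=\<phi> and p=p, OF fin err N N1])
  moreover have "H p (\<lambda>x. (Y x, J x)) = H p (\<lambda>x. ((\<lambda>t. restrict (x t) A), (J x, transcript n \<pi> x)))"
    by (rule H_cong_det[OF fin]) (auto simp: Y_def)
  ultimately show ?thesis unfolding p_def Y_def by simp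
qed

lemma transcript_trunc: "transcript n \<pi> x = transcript n \<pi> (\<lambda>t. if t < n then x t else undefined)"
  unfolding transcript_def obs_def by (simp cong: if_cong)

lemma finite_range_transcript:
  fixes \<pi> :: "('i::finite, 'a::finite) protocol"
  shows "finite (range (transcript n \<pi>))"
proof -
  have "range (transcript n \<pi>) \<subseteq> transcript n \<pi> ` PiE_dflt {..<n} undefined (\<lambda>_. UNIV)"
  proof
    fix y assume "y \<in> range (transcript n \<pi>)"
    then obtain x where y: "y = transcript n \<pi> x" by blast
    have "(\<lambda>t. if t < n then x t else undefined) \<in> PiE_dflt {..<n} undefined (\<lambda>_. UNIV)"
      unfolding PiE_dflt_def by auto
    thus "y \<in> transcript n \<pi> ` PiE_dflt {..<n} undefined (\<lambda>_. UNIV)"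
      unfolding y by (subst transcript_trunc) (rule imageI)
  qed
  moreover have "finite (transcript n \<pi> ` PiE_dflt {..<n} undefined (\<lambda>_. (UNIV :: ('i \<Rightarrow> 'a) set)))"
    by (intro finite_imageI finite_PiE_dflt) auto
  ultimately show ?thesis by (rule finite_subset)
qed

lemma H_transcript_le:
  fixes P :: "('i::finite \<Rightarrow> 'a::finite) pmf"
  shows "H (iid P n) (transcript n \<pi>) \<le> log 2 (real (range_card n \<pi>))"
  unfolding range_card_def by (intro H_le_log_card finite_iid finite_range_transcript) auto

lemma core:
  fixes P :: "('i::finite \<Rightarrow> 'a::finite) pmf" and J :: "(nat \<Rightarrow> 'i \<Rightarrow> 'a) \<Rightarrow> 'j"
  assumes Pt: "Pt \<in> minparts P"
    and good: "measure (iid P n) {x. \<forall>i. Js i (obs n i x) (transcript n \<pi> x) = J x} \<ge> 1 - \<epsilon>"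
    and eps: "0 \<le> \<epsilon>"
  defines "\<delta> \<equiv> 2 + \<epsilon> * log 2 (2 * real (CARD('i \<Rightarrow> 'a) ^ n))"
  shows "0 \<le> ((\<Sum>A\<in>Pt. condH (iid P n) (\<lambda>x t. restrict (x t) A) (\<lambda>x. (J x, transcript n \<pi> x)))
              - condH (iid P n) id (\<lambda>x. (J x, transcript n \<pi> x))) / (real (card Pt) - 1)"
    and "((\<Sum>A\<in>Pt. condH (iid P n) (\<lambda>x t. restrict (x t) A) (\<lambda>x. (J x, transcript n \<pi> x)))
              - condH (iid P n) id (\<lambda>x. (J x, transcript n \<pi> x))) / (real (card Pt) - 1)
         \<le> real n * SKcap P + H (iid P n) (transcript n \<pi>) - H (iid P n) (\<lambda>x. (J x, transcript n \<pi> x)) + 2 * \<delta>"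
proof -
  have Pt': "Pt \<in> parts" and D: "Delta P Pt = SKcap P" using Pt unfolding minparts_def by auto
  note pf = parts_facts[OF Pt']
  have d0: "0 \<le> \<delta>"
  proof -
    have "1 \<le> real (CARD('i \<Rightarrow> 'a) ^ n)" by (simp add: Suc_leI)
    hence h1: "1 \<le> 2 * real (CARD('i \<Rightarrow> 'a) ^ n)" by linarith
    have "0 \<le> log 2 (2 * real (CARD('i \<Rightarrow> 'a) ^ n))" using h1 by (subst zero_le_log_cancel_iff) auto
    thus ?thesis unfolding \<delta>_def using eps by simp
  qed
  have fano: "\<forall>A\<in>Pt. H (iid P n) (\<lambda>x. ((\<lambda>t. restrict (x t) A), (J x, transcript n \<pi> x)))
                    - H (iid P n) (\<lambda>x. ((\<lambda>t. restrict (x t) A), transcript n \<pi> x)) \<le> \<delta>"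
  proof
    fix A assume A: "A \<in> Pt"
    have "A \<noteq> {}" using Pt' A unfolding parts_def partition_on_def by auto
    then obtain i where "i \<in> A" by blast
    thus "H (iid P n) (\<lambda>x. ((\<lambda>t. restrict (x t) A), (J x, transcript n \<pi> x)))
                    - H (iid P n) (\<lambda>x. ((\<lambda>t. restrict (x t) A), transcript n \<pi> x)) \<le> \<delta>"
      unfolding \<delta>_def by (rule fano_block[OF _ good])
  qed
  define N where "N = (\<Sum>A\<in>Pt. condH (iid P n) (\<lambda>x t. restrict (x t) A) (\<lambda>x. (J x, transcript n \<pi> x)))
              - condH (iid P n) id (\<lambda>x. (J x, transcript n \<pi> x))"
  define k where "k = real (card Pt)"
  have k2: "2 \<le> k" unfolding k_def using pf(4) by simp
  have N0: "0 \<le> N" unfolding N_def by (rule block_bound(1)[OF Pt' fano])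
  have N1: "N \<le> (k - 1) * (real n * SKcap P + H (iid P n) (transcript n \<pi>)
              - H (iid P n) (\<lambda>x. (J x, transcript n \<pi> x))) + k * \<delta>"
    unfolding N_def k_def D[symmetric] by (rule block_bound(2)[OF Pt' fano])
  show "0 \<le> ((\<Sum>A\<in>Pt. condH (iid P n) (\<lambda>x t. restrict (x t) A) (\<lambda>x. (J x, transcript n \<pi> x)))
              - condH (iid P n) id (\<lambda>x. (J x, transcript n \<pi> x))) / (real (card Pt) - 1)"
    using N0 k2 unfolding N_def k_def by simp
  define X where "X = real n * SKcap P + H (iid P n) (transcript n \<pi>) - H (iid P n) (\<lambda>x. (J x, transcript n \<pi> x))"
  have "N / (k - 1) \<le> ((k - 1) * X + k * \<delta>) / (k - 1)"
    using N1 k2 unfolding X_def by (intro divide_right_mono) auto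
  also have "\<dots> = X + k / (k - 1) * \<delta>" using k2 by (simp add: field_simps)
  also have "k / (k - 1) * \<delta> \<le> 2 * \<delta>"
    using k2 d0 by (intro mult_right_mono) (simp_all add: divide_simps)
  finally show "((\<Sum>A\<in>Pt. condH (iid P n) (\<lambda>x t. restrict (x t) A) (\<lambda>x. (J x, transcript n \<pi> x)))
              - condH (iid P n) id (\<lambda>x. (J x, transcript n \<pi> x))) / (real (card Pt) - 1)
         \<le> real n * SKcap P + H (iid P n) (transcript n \<pi>) - H (iid P n) (\<lambda>x. (J x, transcript n \<pi> x)) + 2 * \<delta>"
    unfolding N_def k_def X_def by simp
qed
lemma delta_bound:
  fixes C :: nat
  assumes C: "1 \<le> C" and e: "0 \<le> e" and n: "1 \<le> n"
  shows "e * log 2 (2 * real (C ^ n)) \<le> e * (1 + log 2 (real C)) * real n"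
proof -
  have Cp: "0 < real C" using C by simp
  have "log 2 (2 * real (C ^ n)) = 1 + real n * log 2 (real C)"
    using Cp by (simp add: log_mult log_nat_power)
  also have "\<dots> \<le> (1 + log 2 (real C)) * real n"
  proof -
    have "0 \<le> log 2 (real C)" using C by simp
    thus ?thesis using n by (simp add: algebra_simps)
  qed
  finally show ?thesis using e by (simp add: mult.assoc mult_left_mono)
qed

lemma eps_choice:
  fixes LC \<epsilon> :: real
  assumes "0 \<le> LC" "0 < \<epsilon>"
  shows "0 < min (1/2) (\<epsilon> / (16 * (1 + LC)))" "min (1/2) (\<epsilon> / (16 * (1 + LC))) < 1"
        "min (1/2) (\<epsilon> / (16 * (1 + LC))) * (1 + LC) \<le> \<epsilon> / 16"
proof -
  show "0 < min (1/2) (\<epsilon> / (16 * (1 + LC)))" using assms by simp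
  show "min (1/2) (\<epsilon> / (16 * (1 + LC))) < 1" by simp
  have "min (1/2) (\<epsilon> / (16 * (1 + LC))) * (1 + LC) \<le> (\<epsilon> / (16 * (1 + LC))) * (1 + LC)"
    using assms by (intro mult_right_mono) auto
  also have "\<dots> = \<epsilon> / 16" using assms by (simp add: field_simps)
  finally show "min (1/2) (\<epsilon> / (16 * (1 + LC))) * (1 + LC) \<le> \<epsilon> / 16" .
qed

lemma CR_eventually:
  fixes P :: "('i::finite \<Rightarrow> 'a::finite) pmf"
  assumes card: "CARD('i) \<ge> 2" and CR: "is_CR P comm J" and eps: "0 < \<epsilon>"
  shows "\<forall>\<^sub>F n in sequentially. H (iid P n) (\<lambda>x. (J n x, transcript n (comm n) x))
           \<le> real n * SKcap P + H (iid P n) (transcript n (comm n)) + real n * \<epsilon>"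
proof -
  obtain Pt where Pt: "Pt \<in> minparts P" using minparts_ne[OF card, of P] by blast
  define C where "C = CARD('i \<Rightarrow> 'a)"
  have C1: "1 \<le> C" unfolding C_def by (simp add: Suc_leI)
  define LC where "LC = log 2 (real C)"
  have LC0: "0 \<le> LC" unfolding LC_def using C1 by simp
  define e' where "e' = min (1/2) (\<epsilon> / (16 * (1 + LC)))"
  note ec = eps_choice[OF LC0 eps, folded e'_def]
  have ev1: "\<forall>\<^sub>F n in sequentially. \<exists>Js :: 'i \<Rightarrow> (nat \<Rightarrow> 'a) \<Rightarrow> nat list \<Rightarrow> nat.
           measure_pmf.prob (iid P n)
             {x. \<forall>i. Js i (obs n i x) (transcript n (comm n) x) = J n x} \<ge> 1 - e'"
    using CR ec(1,2) unfolding is_CR_def by blast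
  have ev2: "\<forall>\<^sub>F n in sequentially. nat \<lceil>8 / \<epsilon>\<rceil> + 1 \<le> n" by (rule eventually_ge_at_top)
  show ?thesis using ev1 ev2
  proof eventually_elim
    case (elim n)
    then obtain Js :: "'i \<Rightarrow> (nat \<Rightarrow> 'a) \<Rightarrow> nat list \<Rightarrow> nat" where
      good: "measure_pmf.prob (iid P n) {x. \<forall>i. Js i (obs n i x) (transcript n (comm n) x) = J n x} \<ge> 1 - e'"
      by blast
    have n1: "1 \<le> n" using elim(2) by simp
    have n8: "8 \<le> real n * \<epsilon>"
    proof -
      have "8 / \<epsilon> \<le> real n" using elim(2) by linarith
      thus ?thesis using eps by (simp add: field_simps)
    qed
    have c1: "0 \<le> ((\<Sum>A\<in>Pt. condH (iid P n) (\<lambda>x t. restrict (x t) A) (\<lambda>x. (J n x, transcript n (comm n) x)))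
              - condH (iid P n) id (\<lambda>x. (J n x, transcript n (comm n) x))) / (real (card Pt) - 1)"
      by (rule core(1)[OF Pt good]) (use ec in simp)
    have c2: "((\<Sum>A\<in>Pt. condH (iid P n) (\<lambda>x t. restrict (x t) A) (\<lambda>x. (J n x, transcript n (comm n) x)))
              - condH (iid P n) id (\<lambda>x. (J n x, transcript n (comm n) x))) / (real (card Pt) - 1)
         \<le> real n * SKcap P + H (iid P n) (transcript n (comm n)) - H (iid P n) (\<lambda>x. (J n x, transcript n (comm n) x))
           + 2 * (2 + e' * log 2 (2 * real (CARD('i \<Rightarrow> 'a) ^ n)))"
      by (rule core(2)[OF Pt good]) (use ec in simp)
    have d: "e' * log 2 (2 * real (C ^ n)) \<le> e' * (1 + LC) * real n"
      unfolding LC_def by (rule delta_bound[OF C1 _ n1]) (use ec in simp)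
    have "e' * (1 + LC) * real n \<le> \<epsilon> / 16 * real n" using ec(3) by (intro mult_right_mono) auto
    also have "\<epsilon> / 16 * real n = (real n * \<epsilon>) / 16" by simp
    finally have d1: "e' * log 2 (2 * real (C ^ n)) \<le> (real n * \<epsilon>) / 16" using d by linarith
    have d2: "2 * (2 + e' * log 2 (2 * real (CARD('i \<Rightarrow> 'a) ^ n))) \<le> real n * \<epsilon>"
    proof -
      have gen: "\<And>(a::real) (d::real). 8 \<le> d \<Longrightarrow> a \<le> d / 16 \<Longrightarrow> 2 * (2 + a) \<le> d" by (simp only: distrib_left)
      show ?thesis using gen[OF n8 d1[unfolded C_def]] .
    qed
    show ?case using c1 c2 d2 by linarith
  qed
qed
lemma SK_CIW:
  fixes P :: "('i::finite \<Rightarrow> 'a::finite) pmf"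
  assumes card: "CARD('i) \<ge> 2" and SK: "is_SK P comm K (SKcap P)"
  shows "is_CIW P (\<lambda>n x. (K n x, transcript n (comm n) x))"
  unfolding is_CIW_def tendsto_iff
proof (intro allI impI)
  fix e :: real assume e: "0 < e"
  have CR: "is_CR P comm K" using SK unfolding is_SK_def by simp
  define C where "C = CARD('i \<Rightarrow> 'a)"
  have C1: "1 \<le> C" unfolding C_def by (simp add: Suc_leI)
  define LC where "LC = log 2 (real C)"
  have LC0: "0 \<le> LC" unfolding LC_def using C1 by simp
  define e' where "e' = min (1/2) (e / (16 * (1 + LC)))"
  note ec = eps_choice[OF LC0 e, folded e'_def]
  define e1 where "e1 = e / 8"
  have e1: "0 < e1" unfolding e1_def using e by simp
  have ev0: "\<forall>\<^sub>F n in sequentially. MI (iid P n) (K n) (transcript n (comm n)) \<le> e1 \<and>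
           H (iid P n) (K n) / real n \<ge> SKcap P - e1"
    using SK e1 unfolding is_SK_def by blast
  have ev1: "\<forall>\<^sub>F n in sequentially. \<exists>Js :: 'i \<Rightarrow> (nat \<Rightarrow> 'a) \<Rightarrow> nat list \<Rightarrow> nat.
           measure_pmf.prob (iid P n)
             {x. \<forall>i. Js i (obs n i x) (transcript n (comm n) x) = K n x} \<ge> 1 - e'"
    using CR ec(1,2) unfolding is_CR_def by blast
  have ev2: "\<forall>\<^sub>F n in sequentially. nat \<lceil>32 / e\<rceil> + 1 \<le> n" by (rule eventually_ge_at_top)
  show "\<forall>\<^sub>F n in sequentially. dist (condI P n (\<lambda>x. (K n x, transcript n (comm n) x)) / real n) 0 < e"
    using ev0 ev1 ev2
  proof eventually_elim
    case (elim n)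
    then obtain Js :: "'i \<Rightarrow> (nat \<Rightarrow> 'a) \<Rightarrow> nat list \<Rightarrow> nat" where
      good: "measure_pmf.prob (iid P n) {x. \<forall>i. Js i (obs n i x) (transcript n (comm n) x) = K n x} \<ge> 1 - e'"
      by blast
    have n1: "1 \<le> n" using elim(3) by simp
    have n32: "32 \<le> real n * e"
    proof -
      have "32 / e \<le> real n" using elim(3) by linarith
      thus ?thesis using e by (simp add: field_simps)
    qed
    have MI: "MI (iid P n) (K n) (transcript n (comm n)) \<le> e1" using elim(1) by simp
    have HK: "real n * SKcap P - real n * e1 \<le> H (iid P n) (K n)"
    proof -
      have "SKcap P - e1 \<le> H (iid P n) (K n) / real n" using elim(1) by simp
      hence "real n * (SKcap P - e1) \<le> H (iid P n) (K n)" using n1 by (simp add: field_simps)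
      thus ?thesis by (simp add: algebra_simps)
    qed
    have d: "e' * log 2 (2 * real (C ^ n)) \<le> e' * (1 + LC) * real n"
      unfolding LC_def by (rule delta_bound[OF C1 _ n1]) (use ec in simp)
    have "e' * (1 + LC) * real n \<le> e / 16 * real n" using ec(3) by (intro mult_right_mono) auto
    also have "e / 16 * real n = (real n * e) / 16" by simp
    finally have d1: "e' * log 2 (2 * real (CARD('i \<Rightarrow> 'a) ^ n)) \<le> (real n * e) / 16"
      using d unfolding C_def by linarith
    define L where "L = (\<lambda>x. (K n x, transcript n (comm n) x))"
    define Df where "Df = (\<lambda>Pt. ((\<Sum>A\<in>Pt. condH (iid P n) (\<lambda>x t. restrict (x t) A) L)
                             - condH (iid P n) id L) / (real (card Pt) - 1))"
    have bnd: "0 \<le> Df Pt \<and> Df Pt \<le> real n * e / 2" if Pt: "Pt \<in> minparts P" for Pt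
    proof -
      have c1: "0 \<le> Df Pt" unfolding Df_def L_def by (rule core(1)[OF Pt good]) (use ec in simp)
      have c2: "Df Pt \<le> real n * SKcap P + H (iid P n) (transcript n (comm n)) - H (iid P n) (\<lambda>x. (K n x, transcript n (comm n) x))
           + 2 * (2 + e' * log 2 (2 * real (CARD('i \<Rightarrow> 'a) ^ n)))"
        unfolding Df_def L_def by (rule core(2)[OF Pt good]) (use ec in simp)
      have HL: "H (iid P n) (\<lambda>x. (K n x, transcript n (comm n) x)) = H (iid P n) (K n) + H (iid P n) (transcript n (comm n)) - MI (iid P n) (K n) (transcript n (comm n))"
        unfolding MI_def by simp
      have ne: "real n * e1 = real n * e / 8" unfolding e1_def by simp
      have e18: "e1 \<le> real n * e / 8" unfolding e1_def using n1 e by (simp add: field_simps)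
      have "Df Pt \<le> real n * e1 + e1 + 2 * (2 + e' * log 2 (2 * real (CARD('i \<Rightarrow> 'a) ^ n)))"
        using c2 HL MI HK by linarith
      also have "2 * (2 + e' * log 2 (2 * real (CARD('i \<Rightarrow> 'a) ^ n))) = 4 + 2 * (e' * log 2 (2 * real (CARD('i \<Rightarrow> 'a) ^ n)))"
        by simp
      finally have "Df Pt \<le> real n * e1 + e1 + (4 + 2 * (e' * log 2 (2 * real (CARD('i \<Rightarrow> 'a) ^ n))))" .
      hence "Df Pt \<le> real n * e / 2" using ne e18 d1 n32 by linarith
      thus ?thesis using c1 by simp
    qed
    obtain Pt0 where Pt0: "Pt0 \<in> minparts P" using minparts_ne[OF card, of P] by blast
    have fin: "finite (Df ` minparts P)" using minparts_ne(2)[OF card] by simp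
    have ne: "Df ` minparts P \<noteq> {}" using Pt0 by blast
    have cI: "condI P n L = Max (Df ` minparts P)" unfolding condI_def Df_def ..
    have up: "condI P n L \<le> real n * e / 2" unfolding cI using bnd fin ne by (subst Max_le_iff) auto
    have lo: "0 \<le> condI P n L"
    proof -
      have "Df Pt0 \<le> Max (Df ` minparts P)" using fin Pt0 by (intro Max_ge) auto
      thus ?thesis unfolding cI using bnd[OF Pt0] by linarith
    qed
    have "condI P n L / real n \<le> e / 2" using up n1 by (simp add: field_simps)
    moreover have h0: "0 \<le> condI P n L / real n" using lo by simp
    moreover have "dist (condI P n L / real n) 0 = condI P n L / real n"
      by (simp only: dist_real_def diff_0_right abs_of_nonneg[OF h0])
    ultimately show "dist (condI P n (\<lambda>x. (K n x, transcript n (comm n) x)) / real n) 0 < e"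
      unfolding L_def[symmetric] using e by linarith
  qed
qed

lemma ereal_minus_le:
  assumes "a \<le> ereal (R + S)"
  shows "a - ereal S \<le> ereal R"
  using assms by (cases a) auto

theorem theorem1:
  fixes P :: "('i::finite \<Rightarrow> 'a::finite) pmf"
  assumes "CARD('i) \<ge> 2"
  shows "R_SK P \<ge> R_CI P \<and> R_CI P \<ge> CIX P - ereal (SKcap P)"
proof
  show "R_SK P \<ge> R_CI P"
    unfolding R_SK_def R_CI_def
  proof (rule Inf_superset_mono, rule image_mono, rule subsetI)
    fix R assume "R \<in> {R. R \<ge> 0 \<and> (\<exists>comm K. is_SK P comm K (SKcap P) \<and>
      (\<forall>\<epsilon>::real. 0 < \<epsilon> \<longrightarrow> (\<forall>\<^sub>F n in sequentially.
         log 2 (real (range_card n (comm n))) / real n \<le> R + \<epsilon>)))}"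
    then obtain comm K where R0: "R \<ge> 0" and SK: "is_SK P comm K (SKcap P)"
      and rate: "\<forall>\<epsilon>::real. 0 < \<epsilon> \<longrightarrow> (\<forall>\<^sub>F n in sequentially.
         log 2 (real (range_card n (comm n))) / real n \<le> R + \<epsilon>)" by blast
    have "is_CI P comm K"
      unfolding is_CI_def using SK SK_CIW[OF assms SK] unfolding is_SK_def by simp
    thus "R \<in> {R. R \<ge> 0 \<and> (\<exists>comm J. is_CI P comm J \<and>
      (\<forall>\<epsilon>::real. 0 < \<epsilon> \<longrightarrow> (\<forall>\<^sub>F n in sequentially.
         log 2 (real (range_card n (comm n))) / real n \<le> R + \<epsilon>)))}"
      using R0 rate by blast
  qed
  show "R_CI P \<ge> CIX P - ereal (SKcap P)"
    unfolding R_CI_def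
  proof (rule Inf_greatest)
    fix r assume "r \<in> ereal ` {R. R \<ge> 0 \<and> (\<exists>comm J. is_CI P comm J \<and>
      (\<forall>\<epsilon>::real. 0 < \<epsilon> \<longrightarrow> (\<forall>\<^sub>F n in sequentially.
         log 2 (real (range_card n (comm n))) / real n \<le> R + \<epsilon>)))}"
    then obtain R comm J where r: "r = ereal R" and CI: "is_CI P comm J"
      and rate: "\<forall>\<epsilon>::real. 0 < \<epsilon> \<longrightarrow> (\<forall>\<^sub>F n in sequentially.
         log 2 (real (range_card n (comm n))) / real n \<le> R + \<epsilon>)" by blast
    have CR: "is_CR P comm J" using CI unfolding is_CI_def by simp
    have rate2: "\<forall>\<epsilon>::real. 0 < \<epsilon> \<longrightarrow> (\<forall>\<^sub>F n in sequentially.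
         H (iid P n) (\<lambda>x. (J n x, transcript n (comm n) x)) / real n \<le> (R + SKcap P) + \<epsilon>)"
    proof (intro allI impI)
      fix \<epsilon> :: real assume \<epsilon>: "0 < \<epsilon>"
      have ev1: "\<forall>\<^sub>F n in sequentially. log 2 (real (range_card n (comm n))) / real n \<le> R + \<epsilon> / 2"
        using rate \<epsilon> by simp
      have ev2: "\<forall>\<^sub>F n in sequentially. H (iid P n) (\<lambda>x. (J n x, transcript n (comm n) x))
           \<le> real n * SKcap P + H (iid P n) (transcript n (comm n)) + real n * (\<epsilon> / 2)"
        by (rule CR_eventually[OF assms CR]) (use \<epsilon> in simp)
      have ev3: "\<forall>\<^sub>F n in sequentially. 1 \<le> n" by (rule eventually_ge_at_top)
      show "\<forall>\<^sub>F n in sequentially.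
         H (iid P n) (\<lambda>x. (J n x, transcript n (comm n) x)) / real n \<le> (R + SKcap P) + \<epsilon>"
        using ev1 ev2 ev3
      proof eventually_elim
        case (elim n)
        have np: "0 < real n" using elim(3) by simp
        have HF: "H (iid P n) (transcript n (comm n)) \<le> log 2 (real (range_card n (comm n)))"
          by (rule H_transcript_le)
        have "H (iid P n) (\<lambda>x. (J n x, transcript n (comm n) x)) / real n
            \<le> (real n * SKcap P + log 2 (real (range_card n (comm n))) + real n * (\<epsilon> / 2)) / real n"
          using elim(2) HF np by (intro divide_right_mono) auto
        also have "\<dots> = SKcap P + log 2 (real (range_card n (comm n))) / real n + \<epsilon> / 2"
          using np by (simp add: field_simps)
        also have "\<dots> \<le> (R + SKcap P) + \<epsilon>" using elim(1) by simp
        finally show ?case .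
      qed
    qed
    have "CIX P \<le> ereal (R + SKcap P)"
      unfolding CIX_def by (rule Inf_lower) (use CI rate2 in blast)
    thus "CIX P - ereal (SKcap P) \<le> r" unfolding r by (rule ereal_minus_le)
  qed
qed

end
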